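(* For a complex parameter $\nu$ such that all terms are defined, and complex $x\neq0$, $$e^{-x}\sum_{n\ge0}\frac{x^n}{(1+\nu)_n}L_n^{(\nu+1)}(x)=\Gamma(\nu+1)\,x^{-\nu-1}\left\{(x+\nu+1)J_{\nu+1}(2x)-xJ_{\nu+2}(2x)\right\}.$$
   Context: $(a)_k=a(a+1)\cdots(a+k-1)$ is the Pochhammer symbol. $L_n^{(\alpha)}(x)=\frac{(\alpha+1)_n}{n!}\,{}_1F_1\!\left[\begin{matrix}-n\\ \alpha+1\end{matrix};x\right]=\frac{(\alpha+1)_n}{n!}\sum_{k=0}^n\frac{(-n)_k}{(\alpha+1)_k}\frac{x^k}{k!}$ is the generalized Laguerre polynomial, and $J_\alpha$ is the Bessel function of the first kind of order $\alpha$. *)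

theory Defs
  imports "HOL-Analysis.Analysis"
begin

definition laguerre :: "nat \<Rightarrow> complex \<Rightarrow> complex \<Rightarrow> complex" where
  "laguerre n \<alpha> x =
     pochhammer (\<alpha> + 1) n / fact n *
     (\<Sum>k\<le>n. pochhammer (- of_nat n) k / pochhammer (\<alpha> + 1) k * x ^ k / fact k)"

text \<open>Bessel function of the first kind of complex order, principal branch:
  J_a(z) = (z/2)^a * sum_k (-1)^k (z/2)^(2k) / (k! Gamma(k+a+1)), with 1/Gamma = rGamma.\<close>
definition besselJ :: "complex \<Rightarrow> complex \<Rightarrow> complex" where
  "besselJ a z = (z / 2) powr a *
     (\<Sum>k. (-1) ^ k * (z / 2) ^ (2 * k) * rGamma (of_nat k + a + 1) / fact k)"

end

theory Submission imports Defs begin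

lemma ratio_lim:
  fixes c w :: complex
  shows "(\<lambda>n. c / ((of_nat n + 1) * (w + of_nat n))) \<longlonglongrightarrow> 0"
proof -
  have a: "filterlim (\<lambda>n::nat. (of_nat n :: complex) + 1) at_infinity sequentially"
    by (rule tendsto_add_filterlim_at_infinity') (auto intro: tendsto_of_nat)
  have b: "filterlim (\<lambda>n::nat. w + (of_nat n :: complex)) at_infinity sequentially"
    by (rule tendsto_add_filterlim_at_infinity) (auto intro: tendsto_of_nat)
  show ?thesis
    by (rule tendsto_divide_0[OF tendsto_const filterlim_at_infinity_times[OF a b]])
qed

lemma ratio_summable:
  fixes f :: "nat \<Rightarrow> complex" and c w :: complex
  assumes "\<And>n. f (Suc n) = f n * (c / ((of_nat n + 1) * (w + of_nat n)))"
  shows "summable (\<lambda>n. norm (f n))"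
proof -
  have "eventually (\<lambda>n. dist (c / ((of_nat n + 1) * (w + of_nat n))) 0 < 1/2) sequentially"
    using ratio_lim[of c w] unfolding tendsto_iff by (metis divide_pos_pos zero_less_numeral zero_less_one)
  then obtain N where N: "\<And>n. n \<ge> N \<Longrightarrow> norm (c / ((of_nat n + 1) * (w + of_nat n))) < 1/2"
    unfolding eventually_sequentially by auto
  show ?thesis
  proof (rule summable_ratio_test[of "1/2" N])
    fix n assume "n \<ge> N"
    then have h: "norm (c / ((of_nat n + 1) * (w + of_nat n))) \<le> 1/2" using N by fastforce
    have "norm (f (Suc n)) = norm (f n) * norm (c / ((of_nat n + 1) * (w + of_nat n)))"
      by (simp only: assms norm_mult)
    also have "\<dots> \<le> norm (f n) * (1/2)" by (rule mult_left_mono[OF h]) simp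
    finally show "norm (norm (f (Suc n))) \<le> 1/2 * norm (norm (f n))" by simp
  qed simp
qed

lemma term_identity:
  fixes \<nu> x :: complex and n k :: nat
  assumes nz: "\<forall>n. pochhammer (1 + \<nu>) n \<noteq> 0" and kn: "k \<le> n"
  shows "x ^ n / pochhammer (1 + \<nu>) n *
      (pochhammer (\<nu> + 1 + 1) n / fact n *
        (pochhammer (- of_nat n) k / pochhammer (\<nu> + 1 + 1) k * x ^ k / fact k)) =
    (-1) ^ k * x ^ (2 * k) / (pochhammer (1 + \<nu>) k * fact k) * (x ^ (n - k) / fact (n - k)) +
    (-1) ^ k * x ^ (2 * k) / (pochhammer (1 + \<nu>) (Suc k) * fact k) *
       (of_nat (n - k) * x ^ (n - k) / fact (n - k))"
proof -
  define P where "P = pochhammer (1 + \<nu>)"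
  define m where "m = n - k"
  have n: "n = k + m" using kn by (simp add: m_def)
  have Q: "pochhammer (\<nu> + 1 + 1) j = P (Suc j) / (1 + \<nu>)" for j
  proof -
    have "P (Suc j) = (1 + \<nu>) * pochhammer (\<nu> + 1 + 1) j"
      unfolding P_def by (simp add: pochhammer_rec add_ac)
    moreover have "1 + \<nu> \<noteq> 0" using nz[rule_format, of 1] by simp
    ultimately show ?thesis by (simp add: field_simps)
  qed
  have PS: "P (Suc j) = P j * (1 + \<nu> + of_nat j)" for j
    unfolding P_def by (simp add: pochhammer_Suc)
  have Pnz: "P j \<noteq> 0" for j using nz P_def by simp
  have pm: "pochhammer (- of_nat n) k = ((-1) ^ k * fact n / fact m :: complex)"
  proof -
    have "pochhammer (- (of_nat n :: complex)) k = (-1)^k * pochhammer (1 + of_nat m) k"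
      by (subst pochhammer_minus) (simp add: n algebra_simps)
    moreover have "(fact n :: complex) = fact m * pochhammer (1 + of_nat m) k"
      using pochhammer_product'[of "1::complex" m k] by (simp add: n pochhammer_fact add_ac)
    ultimately show ?thesis by simp
  qed
  have nzs: "1 + \<nu> \<noteq> 0" "1 + \<nu> + of_nat k \<noteq> 0" "1 + \<nu> + of_nat n \<noteq> 0"
    using Pnz[of "Suc k"] Pnz[of "Suc n"] Pnz[of 1] by (simp_all add: PS)
  define d where "d = 1 + \<nu> + of_nat k"
  have dnz: "d \<noteq> 0" using nzs d_def by simp
  have PSk: "P (Suc k) = P k * d" using PS d_def by simp
  have PSn: "P (Suc n) = P n * (d + of_nat m)" using PS d_def n by (simp add: algebra_simps)
  have x2: "x ^ (2 * k) = x ^ k * x ^ k" by (simp add: mult_2 power_add)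
  have xn: "x ^ n = x ^ k * x ^ m" by (simp add: n power_add)
  define e where "e = 1 + \<nu>"
  have enz: "e \<noteq> 0" using nzs e_def by simp
  have Pe: "pochhammer e = P" using P_def e_def by simp
  show ?thesis
    unfolding P_def[symmetric] m_def[symmetric] Q pm PSk PSn x2 xn e_def[symmetric] Pe
    using Pnz[of n] Pnz[of k] dnz enz
    by (simp add: field_simps)
qed

lemma ratio_alg:
  fixes p f w x :: complex
  assumes "p \<noteq> 0" "f \<noteq> 0" "w \<noteq> 0"
  shows "(-1) ^ Suc k * x ^ (2 * Suc k) / ((p * w) * fact (Suc k)) =
    (-1) ^ k * x ^ (2 * k) / (p * fact k) * (- (x^2) / ((of_nat k + 1) * w))"
proof -
  have e1: "x ^ (2 * Suc k) = x ^ (2 * k) * x^2" by (simp add: power_add[symmetric])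
  have e2: "(fact (Suc k) :: complex) = (of_nat k + 1) * fact k" by (simp add: algebra_simps)
  have nz: "(of_nat k + 1 :: complex) \<noteq> 0"
    by (metis of_nat_Suc of_nat_eq_0_iff add.commute nat.distinct(1))
  show ?thesis unfolding e1 e2 using assms nz by (simp add: field_simps)
qed

lemma E_alg:
  fixes p w e x :: complex
  assumes "p \<noteq> 0" "w \<noteq> 0" and hw: "e = w - (of_nat j + 1)"
  shows "(-1) ^ Suc j * x ^ (2 * Suc j) / (p * fact (Suc j)) -
     e * ((-1) ^ Suc j * x ^ (2 * Suc j) / ((p * w) * fact (Suc j))) =
     - (x^2) * ((-1) ^ j * x ^ (2 * j) / ((p * w) * fact j))"
proof -
  have e1: "x ^ (2 * Suc j) = x ^ (2 * j) * x^2" by (simp add: power_add[symmetric])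
  have e2: "(fact (Suc j) :: complex) = (of_nat j + 1) * fact j" by (simp add: algebra_simps)
  have nz: "(of_nat j + 1 :: complex) \<noteq> 0"
    by (metis of_nat_Suc of_nat_eq_0_iff add.commute nat.distinct(1))
  have g: "- s * y / (p * (q * f)) - (w - q) * (- s * y / ((p * w) * (q * f))) =
     - y * (s / ((p * w) * f))" if "p \<noteq> 0" "w \<noteq> 0" "q \<noteq> 0" "f \<noteq> 0" for s y f q :: complex
    using that by (simp add: field_simps)
  show ?thesis unfolding e1 e2 hw power_Suc using g[OF assms(1,2) nz fact_nonzero] by simp
qed

theorem mainTheorem9:
  fixes \<nu> x :: complex
  assumes "\<forall>n. pochhammer (1 + \<nu>) n \<noteq> 0"
    and "x \<noteq> 0"
  shows "(\<lambda>n. exp (- x) * (x ^ n / pochhammer (1 + \<nu>) n * laguerre n (\<nu> + 1) x)) sums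
           (Gamma (\<nu> + 1) * x powr (- \<nu> - 1) *
              ((x + \<nu> + 1) * besselJ (\<nu> + 1) (2 * x) - x * besselJ (\<nu> + 2) (2 * x)))"
proof -
  define P where "P = pochhammer (1 + \<nu>)"
  have Pnz: "P j \<noteq> 0" for j using assms(1) P_def by simp
  have PS: "P (Suc j) = P j * (1 + \<nu> + of_nat j)" for j
    unfolding P_def by (simp add: pochhammer_Suc)
  define A where "A k = (-1) ^ k * x ^ (2 * k) / (P k * fact k)" for k
  define A' where "A' k = (-1) ^ k * x ^ (2 * k) / (P (Suc k) * fact k)" for k
  define D where "D k = (-1) ^ k * x ^ (2 * k) / (P (Suc (Suc k)) * fact k)" for k
  define B where "B m = x ^ m / fact m" for m
  define C where "C m = of_nat m * x ^ m / fact m" for m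
  have nzw: "1 + \<nu> + of_nat j \<noteq> 0" for j using Pnz[of "Suc j"] Pnz[of j] PS[of j] by auto
  have nz: "(fact j :: complex) \<noteq> 0" for j by simp
  have rA: "A (Suc k) = A k * (- (x^2) / ((of_nat k + 1) * ((1 + \<nu>) + of_nat k)))" for k
    unfolding A_def PS by (rule ratio_alg[OF Pnz nz nzw])
  have rA': "A' (Suc k) = A' k * (- (x^2) / ((of_nat k + 1) * ((2 + \<nu>) + of_nat k)))" for k
  proof -
    have "(2 + \<nu>) + of_nat k = 1 + \<nu> + of_nat (Suc k)" by simp
    then show ?thesis
      unfolding A'_def PS[of "Suc k"] by (simp only:) (rule ratio_alg[OF Pnz nz nzw])
  qed
  have rD: "D (Suc k) = D k * (- (x^2) / ((of_nat k + 1) * ((3 + \<nu>) + of_nat k)))" for k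
  proof -
    have "(3 + \<nu>) + of_nat k = 1 + \<nu> + of_nat (Suc (Suc k))" by simp
    then show ?thesis
      unfolding D_def PS[of "Suc (Suc k)"] by (simp only:) (rule ratio_alg[OF Pnz nz nzw])
  qed
  have sA: "summable (\<lambda>k. norm (A k))" by (rule ratio_summable[OF rA])
  have sA': "summable (\<lambda>k. norm (A' k))" by (rule ratio_summable[OF rA'])
  have sD: "summable (\<lambda>k. norm (D k))" by (rule ratio_summable[OF rD])
  have Beq: "B = (\<lambda>n. x ^ n /\<^sub>R fact n)"
    by (rule ext) (simp add: B_def scaleR_conv_of_real divide_inverse mult.commute)
  have Bsum: "B sums exp x"
    unfolding Beq by (rule exp_converges)
  have sB: "summable (\<lambda>k. norm (B k))"
    unfolding Beq by (rule summable_norm_exp)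
  have CS: "C (Suc j) = x * B j" for j
  proof -
    have nz: "(of_nat (Suc j) :: complex) \<noteq> 0" by (simp del: of_nat_Suc)
    have "C (Suc j) = of_nat (Suc j) * (x * x ^ j) / (of_nat (Suc j) * fact j)"
      unfolding C_def by (simp del: of_nat_Suc)
    also have "\<dots> = x * B j" using nz unfolding B_def by (simp del: of_nat_Suc)
    finally show ?thesis .
  qed
  have Csum: "C sums (x * exp x)"
  proof -
    have "(\<lambda>j. C (Suc j)) sums (x * exp x)" unfolding CS by (intro sums_mult Bsum)
    then show ?thesis by (subst (asm) sums_Suc_iff) (simp add: C_def)
  qed
  have sC: "summable (\<lambda>k. norm (C k))"
  proof -
    have "summable (\<lambda>j. norm x * norm (B j))" by (intro summable_mult sB)
    then have "summable (\<lambda>j. norm (C (Suc j)))" by (simp add: CS norm_mult)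
    then show ?thesis by (subst (asm) summable_Suc_iff)
  qed
  define SA where "SA = suminf A"
  define SA' where "SA' = suminf A'"
  define SD where "SD = suminf D"
  have c1: "(\<lambda>n. \<Sum>i\<le>n. A i * B (n - i)) sums (SA * exp x)"
    using Cauchy_product_sums[OF sA sB] Bsum unfolding SA_def by (simp add: sums_iff)
  have c2: "(\<lambda>n. \<Sum>i\<le>n. A' i * C (n - i)) sums (SA' * (x * exp x))"
    using Cauchy_product_sums[OF sA' sC] Csum unfolding SA'_def by (simp add: sums_iff)
  have termeq: "x ^ n / pochhammer (1 + \<nu>) n * laguerre n (\<nu> + 1) x =
      (\<Sum>i\<le>n. A i * B (n - i)) + (\<Sum>i\<le>n. A' i * C (n - i))" for n
    unfolding laguerre_def sum_distrib_left sum.distrib[symmetric]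
  proof (rule sum.cong[OF refl])
    fix i assume "i \<in> {..n}"
    then have "i \<le> n" by simp
    then show "x ^ n / pochhammer (1 + \<nu>) n *
      (pochhammer (\<nu> + 1 + 1) n / fact n *
        (pochhammer (- of_nat n) i / pochhammer (\<nu> + 1 + 1) i * x ^ i / fact i)) =
      A i * B (n - i) + A' i * C (n - i)"
      unfolding A_def A'_def B_def C_def P_def by (rule term_identity[OF assms(1)])
  qed
  have lhs: "(\<lambda>n. exp (- x) * (x ^ n / pochhammer (1 + \<nu>) n * laguerre n (\<nu> + 1) x)) sums
      (SA + x * SA')"
  proof -
    have "(\<lambda>n. exp (- x) * ((\<Sum>i\<le>n. A i * B (n - i)) + (\<Sum>i\<le>n. A' i * C (n - i)))) sums
        (exp (- x) * (SA * exp x + SA' * (x * exp x)))"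
      by (intro sums_mult sums_add c1 c2)
    moreover have "exp (- x) * (SA * exp x + SA' * (x * exp x)) = SA + x * SA'"
      using exp_minus_inverse[of x] by (simp add: algebra_simps)
    ultimately show ?thesis unfolding termeq by (simp only:)
  qed
  have notnp: "1 + \<nu> \<notin> \<int>\<^sub>\<le>\<^sub>0"
  proof
    assume "1 + \<nu> \<in> \<int>\<^sub>\<le>\<^sub>0"
    then obtain m where m: "1 + \<nu> = - of_nat m" by (elim nonpos_Ints_cases')
    then have "P (Suc m) = 0" unfolding P_def pochhammer_eq_0_iff by auto
    with Pnz show False by blast
  qed
  define G where "G = Gamma (\<nu> + 1)"
  have Gnz: "G \<noteq> 0" unfolding G_def using Gamma_nonzero[OF notnp] by (simp add: add.commute)
  have GrG: "G * rGamma (1 + \<nu>) = 1"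
    using Gnz unfolding G_def by (simp add: rGamma_inverse_Gamma add.commute)
  have Gk: "G * rGamma (1 + \<nu> + of_nat j) = 1 / P j" for j
  proof -
    have "rGamma (1 + \<nu>) = P j * rGamma (1 + \<nu> + of_nat j)"
      unfolding P_def by (rule pochhammer_rGamma)
    then show ?thesis using GrG Pnz[of j] by (simp add: field_simps)
  qed
  define T1 where "T1 k = (-1) ^ k * x ^ (2 * k) * rGamma (of_nat k + (\<nu> + 1) + 1) / fact k" for k
  define T2 where "T2 k = (-1) ^ k * x ^ (2 * k) * rGamma (of_nat k + (\<nu> + 2) + 1) / fact k" for k
  have GT1: "(\<lambda>k. G * T1 k) = A'"
  proof
    fix k
    have "of_nat k + (\<nu> + 1) + 1 = 1 + \<nu> + of_nat (Suc k)" by simp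
    then have "G * T1 k = (-1) ^ k * x ^ (2 * k) * (G * rGamma (1 + \<nu> + of_nat (Suc k))) / fact k"
      unfolding T1_def by (simp add: algebra_simps)
    then show "G * T1 k = A' k" unfolding Gk A'_def by simp
  qed
  have GT2: "(\<lambda>k. G * T2 k) = D"
  proof
    fix k
    have "of_nat k + (\<nu> + 2) + 1 = 1 + \<nu> + of_nat (Suc (Suc k))" by simp
    then have "G * T2 k = (-1) ^ k * x ^ (2 * k) * (G * rGamma (1 + \<nu> + of_nat (Suc (Suc k)))) / fact k"
      unfolding T2_def by (simp add: algebra_simps)
    then show "G * T2 k = D k" unfolding Gk D_def by simp
  qed
  have sumA': "summable A'" using sA' by (rule summable_norm_cancel)
  have sumD: "summable D" using sD by (rule summable_norm_cancel)
  have sumA: "summable A" using sA by (rule summable_norm_cancel)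
  have sT1: "summable T1" using sumA' Gnz unfolding GT1[symmetric] summable_cmult_iff by simp
  have sT2: "summable T2" using sumD Gnz unfolding GT2[symmetric] summable_cmult_iff by simp
  have GS1: "G * suminf T1 = SA'" unfolding SA'_def GT1[symmetric] by (rule suminf_mult[OF sT1, symmetric])
  have GS2: "G * suminf T2 = SD" unfolding SD_def GT2[symmetric] by (rule suminf_mult[OF sT2, symmetric])
  have J1: "besselJ (\<nu> + 1) (2 * x) = x powr (\<nu> + 1) * suminf T1"
    unfolding besselJ_def T1_def by simp
  have J2: "besselJ (\<nu> + 2) (2 * x) = x powr (\<nu> + 2) * suminf T2"
    unfolding besselJ_def T2_def by simp
  have pw1: "x powr (- \<nu> - 1) * x powr (\<nu> + 1) = 1"
    using assms(2) by (simp add: powr_add[symmetric])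
  have pw2: "x powr (- \<nu> - 1) * x powr (\<nu> + 2) = x"
  proof -
    have "(- \<nu> - 1) + (\<nu> + 2) = 1" by simp
    then show ?thesis by (simp only: powr_add[symmetric] powr_to_1)
  qed
  define E where "E k = A k - (1 + \<nu>) * A' k" for k
  have Esum: "E sums (SA - (1 + \<nu>) * SA')"
    unfolding E_def SA_def SA'_def
    by (intro sums_diff sums_mult summable_sums sumA sumA')
  have ES: "E (Suc j) = - (x^2) * D j" for j
  proof -
    have "E (Suc j) = (-1) ^ Suc j * x ^ (2 * Suc j) / (P (Suc j) * fact (Suc j)) -
     (1 + \<nu>) * ((-1) ^ Suc j * x ^ (2 * Suc j) / ((P (Suc j) * (1 + \<nu> + of_nat (Suc j))) * fact (Suc j)))"
      unfolding E_def A_def A'_def PS[of "Suc j"] ..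
    also have "\<dots> = - (x^2) * ((-1) ^ j * x ^ (2 * j) / ((P (Suc j) * (1 + \<nu> + of_nat (Suc j))) * fact j))"
      by (rule E_alg[OF Pnz nzw]) simp
    also have "\<dots> = - (x^2) * D j" unfolding D_def PS[of "Suc j"] ..
    finally show ?thesis .
  qed
  have E0: "E 0 = 0" unfolding E_def A_def A'_def using Pnz[of 1]
    by (simp add: P_def)
  have "(\<lambda>j. E (Suc j)) sums (- (x^2) * SD)"
    unfolding ES SD_def by (intro sums_mult summable_sums sumD)
  then have "E sums (- (x^2) * SD)" by (subst (asm) sums_Suc_iff) (simp add: E0)
  then have rel: "SA - (1 + \<nu>) * SA' = - (x^2) * SD" using Esum sums_unique2 by blast
  have "Gamma (\<nu> + 1) * x powr (- \<nu> - 1) *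
              ((x + \<nu> + 1) * besselJ (\<nu> + 1) (2 * x) - x * besselJ (\<nu> + 2) (2 * x))
       = (x + \<nu> + 1) * (x powr (- \<nu> - 1) * x powr (\<nu> + 1)) * (G * suminf T1)
         - x * (x powr (- \<nu> - 1) * x powr (\<nu> + 2)) * (G * suminf T2)"
    unfolding J1 J2 G_def by (simp add: algebra_simps)
  also have "\<dots> = SA + x * SA'"
    unfolding pw1 pw2 GS1 GS2 using rel by (simp add: algebra_simps power2_eq_square)
  finally show ?thesis using lhs by simp

qed

end
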